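(* Let $a,A$ be real numbers with $a+3>0$ and $\frac{a+3}{2}=\frac{2}{A+3}$, and let $\xi,\eta,\mu,\mathcal{E},L$ be real numbers. Consider $$U(r)=\xi r^{a+1}+\mu r^{2\left(\sqrt{\frac{a+3}{2}}-1\right)},\qquad V(\rho)=\eta\rho^{A+1}+\mu\rho^{2\left(\sqrt{\frac{A+3}{2}}-1\right)}.$$ Then: (i) $U$ and $V$ are classically Newtonianly dual: if $\xi=-\mathcal{E}$ and $\theta$ satisfies the orbit equation for $U$ with energy $E=-\eta$ and angular momentum $L$ on an open interval $I\subset(0,\infty)$, then $\phi(\rho)=\frac{2}{A+3}\theta\left(\rho^{(A+3)/2}\right)$ satisfies the orbit equation for $V$ with energy $\mathcal{E}$ and angular momentum $L$ on $J=\{\rho>0:\rho^{(A+3)/2}\in I\}$; (ii) the terms $\xi r^{a+1}$ and $\eta\rho^{A+1}$ are Newtonianly dual power potentials, and so are $\mu r^{2(\sqrt{(a+3)/2}-1)}$ and $\mu\rho^{2(\sqrt{(A+3)/2}-1)}$; i.e., writing the second-term exponents as $b+1$ and $B+1$ with $b=2\sqrt{\frac{a+3}{2}}-3$, $B=2\sqrt{\frac{A+3}{2}}-3$, one has $\frac{b+3}{2}=\frac{2}{B+3}$ (as well as $\frac{a+3}{2}=\frac{2}{A+3}$).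
   Context: For a central potential $W$ on $(0,\infty)$, energy $E$ and angular momentum $L$, a differentiable function $\theta$ on an open interval $I\subset(0,\infty)$ satisfies the (classical) orbit equation if for all $r\in I$ the quantity $E-\frac{L^2}{2r^2}-W(r)$ is positive and $\frac{d\theta}{dr}=\frac{L/r^{2}}{\sqrt{2\left[E-\frac{L^{2}}{2r^{2}}-W(r)\right]}}$. Two power potentials $\xi r^{\alpha+1}$ and $\eta\rho^{\beta+1}$ are called Newtonianly dual when $\frac{\alpha+3}{2}=\frac{2}{\beta+3}$. *)

theory Defs
  imports "HOL-Analysis.Analysis"
begin

definition orbit_eq :: "(real \<Rightarrow> real) \<Rightarrow> real \<Rightarrow> real \<Rightarrow> (real \<Rightarrow> real) \<Rightarrow> real set \<Rightarrow> bool" where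
  "orbit_eq W E L \<theta> I \<longleftrightarrow>
     (\<forall>r\<in>I. E - L^2 / (2 * r^2) - W r > 0 \<and>
        (\<theta> has_real_derivative (L / r^2) / sqrt (2 * (E - L^2 / (2 * r^2) - W r))) (at r))"

text \<open>Newtonian duality of the power potentials xi r^(alpha+1) and eta rho^(beta+1).\<close>
definition newton_dual :: "real \<Rightarrow> real \<Rightarrow> bool" where
  "newton_dual \<alpha> \<beta> \<longleftrightarrow> (\<alpha> + 3) / 2 = 2 / (\<beta> + 3)"

end

theory Submission
  imports Defs
begin

theorem mainTheorem2:
  fixes a A \<xi> \<eta> \<mu> \<E> L :: real
  assumes "a + 3 > 0"
    and "(a + 3) / 2 = 2 / (A + 3)"
  defines "U \<equiv> (\<lambda>r. \<xi> * r powr (a + 1) + \<mu> * r powr (2 * (sqrt ((a + 3) / 2) - 1)))"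
    and "V \<equiv> (\<lambda>\<rho>. \<eta> * \<rho> powr (A + 1) + \<mu> * \<rho> powr (2 * (sqrt ((A + 3) / 2) - 1)))"
    and "b \<equiv> 2 * sqrt ((a + 3) / 2) - 3"
    and "B \<equiv> 2 * sqrt ((A + 3) / 2) - 3"
  shows "(\<forall>\<theta> I. \<xi> = - \<E> \<and> open I \<and> is_interval I \<and> I \<subseteq> {0<..} \<and> orbit_eq U (- \<eta>) L \<theta> I \<longrightarrow>
            orbit_eq V \<E> L (\<lambda>\<rho>. 2 / (A + 3) * \<theta> (\<rho> powr ((A + 3) / 2)))
              {\<rho>. \<rho> > 0 \<and> \<rho> powr ((A + 3) / 2) \<in> I})
         \<and> newton_dual a A \<and> newton_dual b B"
proof -
  define k where "k = (A + 3) / 2"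
  have A3: "A + 3 > 0"
  proof (rule ccontr)
    assume "\<not> A + 3 > 0"
    hence "2 / (A + 3) \<le> 0" by (simp add: divide_nonneg_nonpos)
    moreover have "(a + 3) / 2 > 0" using assms(1) by simp
    ultimately show False using assms(2) by simp
  qed
  hence kpos: "k > 0" by (simp add: k_def)
  have c2: "2 / (A + 3) = 1 / k" by (simp add: k_def)
  have ak: "(a + 3) / 2 = 1 / k" using assms(2) c2 by simp
  have a1: "k * (a + 1) = 2 - 2 * k"
  proof -
    have "a + 3 = 2 / k" using ak by (simp add: field_simps)
    hence "k * (a + 3) = 2" using kpos by simp
    thus ?thesis by (simp add: algebra_simps)
  qed
  have sq: "k * sqrt (1 / k) = sqrt k"
  proof -
    have "k = sqrt k * sqrt k" using kpos by simp
    hence "k * sqrt (1/k) = sqrt k * (sqrt k * sqrt (1/k))" by (metis mult.assoc)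
    also have "sqrt k * sqrt (1/k) = 1" using kpos by (simp add: real_sqrt_divide)
    finally show ?thesis by simp
  qed
  have part1: "orbit_eq V \<E> L (\<lambda>\<rho>. 2 / (A + 3) * \<theta> (\<rho> powr ((A + 3) / 2)))
              {\<rho>. \<rho> > 0 \<and> \<rho> powr ((A + 3) / 2) \<in> I}"
    if xi: "\<xi> = - \<E>" and sub: "I \<subseteq> {0<..}" and orb: "orbit_eq U (- \<eta>) L \<theta> I" for \<theta> I
    unfolding orbit_eq_def
  proof
    fix \<rho> assume "\<rho> \<in> {\<rho>. \<rho> > 0 \<and> \<rho> powr ((A + 3) / 2) \<in> I}"
    hence rp: "\<rho> > 0" and rI: "\<rho> powr k \<in> I" by (auto simp: k_def)
    define r where "r = \<rho> powr k"
    have r0: "r > 0" using rp by (simp add: r_def)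
    define Q where "Q = - \<eta> - L^2 / (2 * r^2) - U r"
    define P where "P = \<E> - L^2 / (2 * \<rho>^2) - V \<rho>"
    from orb rI have Qp: "Q > 0" and
      dth: "(\<theta> has_real_derivative (L / r^2) / sqrt (2 * Q)) (at r)"
      unfolding orbit_eq_def Q_def r_def by auto
    define t where "t = \<rho> powr (k - 1)"
    have tp: "t > 0" using rp by (simp add: t_def)
    have t2: "t^2 = \<rho> powr (2*k - 2)" using rp
      by (simp add: t_def powr_power algebra_simps)
    have r2: "r^2 = \<rho>^2 * t^2"
    proof -
      have "r^2 = \<rho> powr (2*k)" using rp
        by (simp add: r_def powr_power)
      also have "\<dots> = \<rho> powr 2 * \<rho> powr (2*k - 2)" by (simp add: powr_add[symmetric])
      also have "\<dots> = \<rho>^2 * t^2" using rp t2 by simp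
      finally show ?thesis .
    qed
    have e1: "t^2 * r powr (a + 1) = 1"
    proof -
      have "r powr (a+1) = \<rho> powr (2 - 2*k)"
        using a1 by (simp add: r_def powr_powr)
      thus ?thesis using rp t2 by (simp add: powr_add[symmetric])
    qed
    have e2: "t^2 * r powr (2 * (sqrt ((a + 3) / 2) - 1)) = \<rho> powr (2 * (sqrt ((A + 3) / 2) - 1))"
    proof -
      have "r powr (2 * (sqrt ((a + 3) / 2) - 1)) = \<rho> powr (2 * sqrt k - 2 * k)"
      proof -
        have "k * (2 * (sqrt ((a + 3) / 2) - 1)) = 2 * sqrt k - 2 * k"
          using sq by (simp add: ak algebra_simps)
        thus ?thesis by (simp add: r_def powr_powr)
      qed
      thus ?thesis using rp t2 by (simp add: powr_add[symmetric] k_def)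
    qed
    have "2*k - 2 = A + 1" by (simp add: k_def)
    hence e3: "t^2 = \<rho> powr (A + 1)" using t2 by (simp add: add.commute)
    have PQ: "P = t^2 * Q"
    proof -
      have "t^2 * Q = - \<eta> * t^2 - L^2 * t^2 / (2 * r^2) - \<xi> * (t^2 * r powr (a + 1))
          - \<mu> * (t^2 * r powr (2 * (sqrt ((a + 3) / 2) - 1)))"
        by (simp add: Q_def U_def algebra_simps)
      also have "L^2 * t^2 / (2 * r^2) = L^2 / (2 * \<rho>^2)" using tp rp by (simp add: r2)
      finally show ?thesis using e1 e2 e3 xi by (simp add: P_def V_def algebra_simps)
    qed
    have Ppos: "P > 0" using PQ Qp tp by simp
    have dk: "((\<lambda>x. x powr k) has_real_derivative k * t) (at \<rho>)"
      using has_real_derivative_powr[OF rp] by (simp add: t_def)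
    have "((\<lambda>x. \<theta> (x powr k)) has_real_derivative (L / r^2) / sqrt (2 * Q) * (k * t)) (at \<rho>)"
      using DERIV_chain2[OF dth[unfolded r_def] dk] by (simp add: r_def)
    hence d2: "((\<lambda>x. 1 / k * \<theta> (x powr k)) has_real_derivative 1 / k * ((L / r^2) / sqrt (2 * Q) * (k * t))) (at \<rho>)"
      by (rule DERIV_cmult)
    have "1 / k * ((L / r^2) / sqrt (2 * Q) * (k * t)) = (L / \<rho>^2) / sqrt (2 * P)"
    proof -
      have "sqrt (2 * P) = t * sqrt (2 * Q)" using tp PQ
        by (simp add: real_sqrt_mult algebra_simps)
      moreover have "sqrt (2 * Q) > 0" using Qp by simp
      moreover have "\<And>q. k>0 \<Longrightarrow> t>0 \<Longrightarrow> \<rho>>0 \<Longrightarrow> q > 0 \<Longrightarrow> 1 / k * ((L / (\<rho>^2 * t^2)) / q * (k * t)) = (L / \<rho>^2) / (t*q)"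
        by (simp add: field_simps power2_eq_square)
      ultimately show ?thesis using kpos tp rp unfolding r2 by metis
    qed
    with d2 have "((\<lambda>\<rho>. 2 / (A + 3) * \<theta> (\<rho> powr ((A + 3) / 2))) has_real_derivative
        (L / \<rho>^2) / sqrt (2 * (\<E> - L^2 / (2 * \<rho>^2) - V \<rho>))) (at \<rho>)"
      unfolding c2 k_def[symmetric] P_def[symmetric] by simp
    with Ppos show "\<E> - L^2 / (2 * \<rho>^2) - V \<rho> > 0 \<and> ((\<lambda>\<rho>. 2 / (A + 3) * \<theta> (\<rho> powr ((A + 3) / 2))) has_real_derivative
        (L / \<rho>^2) / sqrt (2 * (\<E> - L^2 / (2 * \<rho>^2) - V \<rho>))) (at \<rho>)"
      by (simp add: P_def)
  qed
  have nd1: "newton_dual a A" using assms(2) unfolding newton_dual_def .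
  have nd2: "newton_dual b B"
  proof -
    have "(b + 3) / 2 = sqrt (1 / k)" by (simp add: b_def ak)
    moreover have "2 / (B + 3) = 1 / sqrt k" by (simp add: B_def k_def)
    ultimately show ?thesis by (simp add: newton_dual_def real_sqrt_divide)
  qed
  show ?thesis using part1 nd1 nd2 by blast
qed

end
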